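(* Let $d\ge1$, $s\in(0,1)$ and $0<\lambda\le\Lambda$. Let $K:\mathbb{R}^d\to\mathbb{R}$ be a measurable kernel with $\lambda|y|^{-d-s}\le K(y)\le\Lambda|y|^{-d-s}$ and $K(y)=K(-y)$ for all $y\ne0$, and let $B=B_r(x_0)$ be an open ball with $r>0$. Then for every $x\in\partial B$ the limit \[ H_{K,B}(x)=\lim_{\varepsilon\to0^+}\int_{\mathbb{R}^d\setminus B_\varepsilon(x)}\tilde\chi_B(y)K(x-y)\,dy \] exists. Moreover, \[ \lambda r^{-s}H_{s,B_1}(e_1)\le H_{K,B}(x)\le\Lambda r^{-s}H_{s,B_1}(e_1)\qquad\text{for all }x\in\partial B, \] where \[ H_{s,B_1}(e_1)=\lim_{\varepsilon\to0^+}\int_{\mathbb{R}^d\setminus B_\varepsilon}\tilde\chi_{B_1(e_1)}(y)\frac{dy}{|y|^{d+s}} . \]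
   Context: $B_\rho(x)$ is the open ball of radius $\rho$ centred at $x$, and $B_\rho=B_\rho(0)$. $e_1$ is the first standard basis vector. $\tilde\chi_F=\chi_{\mathbb{R}^d\setminus F}-\chi_F$, where $\chi_F$ is the characteristic function of $F$. *)

theory Defs
  imports "HOL-Analysis.Analysis"
begin

definition chi_tilde :: "'a set \<Rightarrow> 'a \<Rightarrow> real" where
  "chi_tilde F y = (if y \<in> F then -1 else 1)"

definition trunc_int :: "('a::euclidean_space \<Rightarrow> real) \<Rightarrow> 'a set \<Rightarrow> 'a \<Rightarrow> real \<Rightarrow> real" where
  "trunc_int K B x \<epsilon> = (LINT y : (UNIV - ball x \<epsilon>) | lebesgue. chi_tilde B y * K (x - y))"

definition H_KB :: "('a::euclidean_space \<Rightarrow> real) \<Rightarrow> 'a set \<Rightarrow> 'a \<Rightarrow> real" where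
  "H_KB K B x = Lim (at_right 0) (trunc_int K B x)"

definition e1 :: "'a::euclidean_space" where
  "e1 = (SOME b. b \<in> Basis)"

definition H_s_B1_e1 :: "real \<Rightarrow> 'a::euclidean_space itself \<Rightarrow> real" where
  "H_s_B1_e1 s _ = Lim (at_right 0)
     (\<lambda>\<epsilon>. LINT y : (UNIV - ball (0::'a) \<epsilon>) | lebesgue.
        chi_tilde (ball (e1::'a) 1) y * (1 / norm y powr (real DIM('a) + s)))"

end

theory Submission
  imports Defs "HOL-Analysis.Analysis"
begin



lemma open_sets_lebesgue: "open (U::'a::euclidean_space set) \<Longrightarrow> U \<in> sets lebesgue"
  by (simp add: borel_open sets_completionI_sets)

lemma orth_emeasure_open:
  fixes Q :: "'a::euclidean_space \<Rightarrow> 'a"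
  assumes Q: "orthogonal_transformation Q" and U: "open U"
  shows "emeasure lebesgue (Q ` U) = emeasure lebesgue U"
proof -
  have lin: "linear Q" using Q orthogonal_transformation_linear by blast
  have injQ: "inj Q" using Q orthogonal_transformation_inj by blast
  define KK where "KK = {i::'a\<times>real. 0 < snd i \<and> ball (fst i) (snd i) \<subseteq> U}"
  have cov: "\<exists>i. i \<in> KK \<and> x \<in> ball (fst i) (snd i) \<and> snd i < d" if "x \<in> U" "0 < d" for x d
  proof -
    obtain e where e: "e > 0" "ball x e \<subseteq> U" using U \<open>x \<in> U\<close> open_contains_ball by blast
    show ?thesis
      by (rule exI[of _ "(x, min e d / 2)"]) (use e \<open>0 < d\<close> in \<open>auto simp: KK_def\<close>)
  qed
  obtain C where C: "countable C" "C \<subseteq> KK"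
    and pw: "pairwise (\<lambda>i j. disjnt (ball (fst i) (snd i)) (ball (fst j) (snd j))) C"
    and neg: "negligible (U - (\<Union>i\<in>C. ball (fst i) (snd i)))"
    using Vitali_covering_theorem_balls[of U KK fst snd, OF cov] by blast
  define W where "W = (\<Union>i\<in>C. ball (fst i) (snd i))"
  have WU: "W \<subseteq> U" using C by (auto simp: W_def KK_def)
  have Wo: "open W" unfolding W_def by auto
  have UW: "U = W \<union> (U - W)" using WU by auto
  have null1: "U - W \<in> null_sets lebesgue" using neg negligible_iff_null_sets W_def by blast
  have "emeasure lebesgue U = emeasure lebesgue W"
    by (subst UW, rule emeasure_Un_null_set) (use Wo open_sets_lebesgue null1 in auto)
  also have "\<dots> = (\<integral>\<^sup>+ i. emeasure lebesgue (ball (fst i) (snd i)) \<partial>count_space C)"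
    unfolding W_def
    by (rule emeasure_UN_countable) (use C pw in \<open>auto simp: disjoint_family_on_def pairwise_def disjnt_def\<close>)
  also have "\<dots> = (\<integral>\<^sup>+ i. emeasure lebesgue (ball (Q (fst i)) (snd i)) \<partial>count_space C)"
  proof (rule nn_integral_cong)
    fix i assume "i \<in> space (count_space C)"
    then have "snd i \<ge> 0" using C by (auto simp: KK_def)
    then show "emeasure lebesgue (ball (fst i) (snd i)) = emeasure lebesgue (ball (Q (fst i)) (snd i))"
      by (metis emeasure_lebesgue_ball_conv_unit_ball)
  qed
  also have "\<dots> = emeasure lebesgue (\<Union>i\<in>C. ball (Q (fst i)) (snd i))"
  proof (rule emeasure_UN_countable[symmetric])
    show "disjoint_family_on (\<lambda>i. ball (Q (fst i)) (snd i)) C"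
      unfolding disjoint_family_on_def
    proof (intro ballI impI)
      fix i j assume ij: "i \<in> C" "j \<in> C" "i \<noteq> j"
      have "ball (fst i) (snd i) \<inter> ball (fst j) (snd j) = {}"
        using pw ij by (auto simp: pairwise_def disjnt_def)
      then have "Q ` ball (fst i) (snd i) \<inter> Q ` ball (fst j) (snd j) = {}"
        using injQ by (simp add: image_Int[symmetric])
      then show "ball (Q (fst i)) (snd i) \<inter> ball (Q (fst j)) (snd j) = {}"
        by (simp add: image_orthogonal_transformation_ball Q)
    qed
  qed (use C open_sets_lebesgue in auto)
  also have "(\<Union>i\<in>C. ball (Q (fst i)) (snd i)) = Q ` W"
    by (simp add: W_def image_UN image_orthogonal_transformation_ball Q)
  also have "emeasure lebesgue (Q ` W) = emeasure lebesgue (Q ` W \<union> Q ` (U - W))"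
  proof (rule emeasure_Un_null_set[symmetric])
    show "Q ` W \<in> sets lebesgue"
      by (rule differentiable_image_in_sets_lebesgue) (use Wo open_sets_lebesgue lin linear_imp_differentiable_on in auto)
    have "negligible (Q ` (U - W))"
      by (rule negligible_differentiable_image_negligible) (use neg W_def lin linear_imp_differentiable_on in auto)
    then show "Q ` (U - W) \<in> null_sets lebesgue" using negligible_iff_null_sets by blast
  qed
  also have "Q ` W \<union> Q ` (U - W) = Q ` U" using UW by (metis image_Un)
  finally show ?thesis ..
qed

lemma orth_distr_lborel:
  fixes Q :: "'a::euclidean_space \<Rightarrow> 'a"
  assumes Q: "orthogonal_transformation Q"
  shows "distr lborel borel Q = lborel"
proof (rule lborel_eqI[symmetric])
  have lin: "linear Q" using Q orthogonal_transformation_linear by blast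
  have bij: "bij Q" using Q orthogonal_transformation_bij by blast
  have Qm[measurable]: "Q \<in> borel_measurable borel"
    using lin by (intro borel_measurable_continuous_onI linear_continuous_on linear_conv_bounded_linear[THEN iffD1])
  fix l u :: 'a assume "\<And>b. b \<in> Basis \<Longrightarrow> l \<bullet> b \<le> u \<bullet> b"
  then have box: "emeasure lborel (box l u) = (\<Prod>b\<in>Basis. (u - l) \<bullet> b)"
    by (simp add: emeasure_lborel_box_eq inner_diff_left)
  have Qi: "orthogonal_transformation (inv Q)" using Q orthogonal_transformation_inv by blast
  have vim: "Q -` box l u = inv Q ` box l u"
    using bij by (simp add: bij_vimage_eq_inv_image)
  have op: "open (Q -` box l u)"
    by (rule continuous_open_vimage) (use lin in \<open>auto simp: linear_continuous_at linear_conv_bounded_linear\<close>)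
  have "emeasure (distr lborel borel Q) (box l u) = emeasure lborel (Q -` box l u)"
    by (simp add: emeasure_distr)
  also have "\<dots> = emeasure lebesgue (Q -` box l u)"
    using op by (simp add: emeasure_completion borel_open)
  also have "\<dots> = emeasure lebesgue (box l u)"
    using orth_emeasure_open[OF Qi, of "box l u"] vim by (simp add: open_box)
  also have "\<dots> = emeasure lborel (box l u)"
    by (simp add: emeasure_completion)
  finally show "emeasure (distr lborel borel Q) (box l u) = (\<Prod>b\<in>Basis. (u - l) \<bullet> b)"
    using box by simp
qed simp




lemma exists_orth_map:
  fixes a b :: "'a::euclidean_space"
  assumes a: "norm a = 1" and b: "norm b = 1"
  obtains Q where "orthogonal_transformation Q" "Q a = b"
proof (cases "a = b")
  case True
  then show ?thesis using that[of "\<lambda>x. x"] by simp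
next
  case False
  define u where "u = a - b"
  have uu: "u \<bullet> u \<noteq> 0" using False by (simp add: u_def)
  define Q where "Q v = v - (2 * (v \<bullet> u) / (u \<bullet> u)) *\<^sub>R u" for v
  have lin: "linear Q"
    by (rule linearI) (auto simp: Q_def inner_add_left algebra_simps add_divide_distrib scaleR_add_left)
  have "Q v \<bullet> Q w = v \<bullet> w" for v w
    using uu by (simp add: Q_def inner_diff_left inner_diff_right inner_commute field_simps)
  then have orth: "orthogonal_transformation Q"
    using lin by (simp add: orthogonal_transformation_def)
  have aa: "a \<bullet> a = 1" and bb: "b \<bullet> b = 1" using a b by (simp_all add: dot_square_norm)
  have "a \<bullet> u = 1 - a \<bullet> b" "u \<bullet> u = 2 - 2 * (a \<bullet> b)"
    using aa bb by (simp_all add: u_def inner_diff_left inner_diff_right inner_commute)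
  then have r1: "2 * (a \<bullet> u) / (u \<bullet> u) = 1" using uu by (simp add: field_simps)
  have "Q a = b" unfolding Q_def by (simp only: r1 scaleR_one) (simp add: u_def)
  then show ?thesis using that orth by blast
qed

lemma nn_integral_orth:
  fixes Q :: "'a::euclidean_space \<Rightarrow> 'a" and f :: "'a \<Rightarrow> ennreal"
  assumes Q: "orthogonal_transformation Q" and f[measurable]: "f \<in> borel_measurable borel"
  shows "(\<integral>\<^sup>+ z. f (Q z) \<partial>lborel) = (\<integral>\<^sup>+ y. f y \<partial>lborel)"
proof -
  have lin: "linear Q" using Q orthogonal_transformation_linear by blast
  have Qm[measurable]: "Q \<in> borel_measurable borel"
    using lin by (intro borel_measurable_continuous_onI linear_continuous_on linear_conv_bounded_linear[THEN iffD1])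
  have "(\<integral>\<^sup>+ y. f y \<partial>lborel) = (\<integral>\<^sup>+ y. f y \<partial>distr lborel borel Q)"
    by (simp add: orth_distr_lborel[OF Q])
  also have "\<dots> = (\<integral>\<^sup>+ z. f (Q z) \<partial>lborel)"
    by (rule nn_integral_distr) auto
  finally show ?thesis ..
qed

lemma nn_integral_affine_orth:
  fixes Q :: "'a::euclidean_space \<Rightarrow> 'a" and f :: "'a \<Rightarrow> ennreal"
  assumes Q: "orthogonal_transformation Q" and f[measurable]: "f \<in> borel_measurable borel"
    and r: "r > 0"
  shows "(\<integral>\<^sup>+ y. f y \<partial>lborel) = ennreal (r ^ DIM('a)) * (\<integral>\<^sup>+ z. f (x + r *\<^sub>R Q z) \<partial>lborel)"
proof -
  have lin: "linear Q" using Q orthogonal_transformation_linear by blast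
  have Qm[measurable]: "Q \<in> borel_measurable borel"
    using lin by (intro borel_measurable_continuous_onI linear_continuous_on linear_conv_bounded_linear[THEN iffD1])
  have "(\<integral>\<^sup>+ y. f y \<partial>lborel) = (\<integral>\<^sup>+ y. f y \<partial>density (distr lborel borel (\<lambda>z. x + r *\<^sub>R z)) (\<lambda>_. \<bar>r\<bar>^DIM('a)))"
    using lborel_affine[of r x] r by simp
  also have "\<dots> = (\<integral>\<^sup>+ w. ennreal (r ^ DIM('a)) * f (x + r *\<^sub>R w) \<partial>lborel)"
    using r by (simp add: nn_integral_density nn_integral_distr)
  also have "\<dots> = ennreal (r ^ DIM('a)) * (\<integral>\<^sup>+ w. f (x + r *\<^sub>R w) \<partial>lborel)"
    by (simp add: nn_integral_cmult)
  also have "(\<integral>\<^sup>+ w. f (x + r *\<^sub>R w) \<partial>lborel) = (\<integral>\<^sup>+ z. f (x + r *\<^sub>R Q z) \<partial>lborel)"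
    by (rule nn_integral_orth[OF Q, symmetric]) simp
  finally show ?thesis .
qed

lemma lebesgue_reflect:
  fixes t :: "'a::euclidean_space"
  shows "distr lebesgue lebesgue (\<lambda>y. t - y) = lebesgue"
    and "(\<lambda>y. t - y) \<in> lebesgue \<rightarrow>\<^sub>M lebesgue"
proof -
  have T: "(\<lambda>x. t + (\<Sum>j\<in>Basis. ((-1) * (x \<bullet> j)) *\<^sub>R j)) = (\<lambda>y::'a. t - y)"
  proof
    fix x :: 'a
    have "(\<Sum>j\<in>Basis. ((-1) * (x \<bullet> j)) *\<^sub>R j) = - (\<Sum>j\<in>Basis. (x \<bullet> j) *\<^sub>R j)"
      by (simp add: sum_negf[symmetric])
    then show "t + (\<Sum>j\<in>Basis. ((-1) * (x \<bullet> j)) *\<^sub>R j) = t - x"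
      by (simp add: euclidean_representation)
  qed
  have "lebesgue = density (distr lebesgue lebesgue (\<lambda>y::'a. t - y)) (\<lambda>_. 1)"
    using lebesgue_affine_euclidean[of "\<lambda>_. -1" t] unfolding T by simp
  then show "distr lebesgue lebesgue (\<lambda>y. t - y) = lebesgue"
    by (simp add: density_1)
  show "(\<lambda>y. t - y) \<in> lebesgue \<rightarrow>\<^sub>M lebesgue"
    using lebesgue_affine_measurable[of "\<lambda>_. -1" t] unfolding T by simp
qed




lemma ennreal_le_suminf: "(f::nat \<Rightarrow> ennreal) k \<le> suminf f"
proof -
  have "sum f {k} \<le> suminf f" by (rule sum_le_suminf) (auto intro: summableI)
  then show ?thesis by simp
qed

lemma dyadic_bound:
  fixes F :: "'a::euclidean_space \<Rightarrow> real" and A :: "nat \<Rightarrow> 'a set"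
  assumes cover: "\<And>z. z \<in> S \<Longrightarrow> \<exists>k. z \<in> A k"
    and Fb: "\<And>k z. z \<in> A k \<Longrightarrow> F z \<le> c k"
    and Am: "\<And>k. emeasure lborel (A k) \<le> ennreal (m k)"
    and c0: "\<And>k. 0 \<le> c k" and m0: "\<And>k. 0 \<le> m k"
    and sm: "summable (\<lambda>k. c k * m k)"
    and Ab: "\<And>k. A k \<in> sets borel"
  shows "(\<integral>\<^sup>+ z. ennreal (indicator S z * F z) \<partial>lborel) < \<infinity>"
proof -
  have pt: "ennreal (indicator S z * F z) \<le> (\<Sum>k. ennreal (c k * indicator (A k) z))" for z
  proof (cases "z \<in> S")
    case True
    then obtain k where k: "z \<in> A k" using cover by blast
    have "ennreal (indicator S z * F z) = ennreal (F z)" using True by simp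
    also have "\<dots> \<le> ennreal (c k * indicator (A k) z)" using Fb[OF k] k by (simp add: ennreal_leI)
    also have "\<dots> \<le> (\<Sum>k. ennreal (c k * indicator (A k) z))" by (rule ennreal_le_suminf)
    finally show ?thesis .
  next
    case False then show ?thesis by simp
  qed
  have "(\<integral>\<^sup>+ z. ennreal (indicator S z * F z) \<partial>lborel) \<le> (\<integral>\<^sup>+ z. (\<Sum>k. ennreal (c k * indicator (A k) z)) \<partial>lborel)"
    by (rule nn_integral_mono) (rule pt)
  also have "\<dots> = (\<Sum>k. \<integral>\<^sup>+ z. ennreal (c k * indicator (A k) z) \<partial>lborel)"
    by (rule nn_integral_suminf) (use Ab in measurable)
  also have "\<dots> \<le> (\<Sum>k. ennreal (c k * m k))"
  proof (rule suminf_le)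
    fix k
    have "(\<integral>\<^sup>+ z. ennreal (c k * indicator (A k) z) \<partial>lborel) = (\<integral>\<^sup>+ z. ennreal (c k) * indicator (A k) z \<partial>lborel)"
      by (rule nn_integral_cong) (simp add: c0 ennreal_mult' split: split_indicator)
    also have "\<dots> = ennreal (c k) * emeasure lborel (A k)"
      using Ab by (simp add: nn_integral_cmult_indicator)
    also have "\<dots> \<le> ennreal (c k) * ennreal (m k)" by (rule mult_left_mono) (use Am in auto)
    also have "\<dots> = ennreal (c k * m k)" using c0 m0 by (simp add: ennreal_mult)
    finally show "(\<integral>\<^sup>+ z. ennreal (c k * indicator (A k) z) \<partial>lborel) \<le> ennreal (c k * m k)" .
  qed (auto intro: summableI)
  also have "\<dots> < \<infinity>" proof -
    have "\<And>k. 0 \<le> c k * m k" using c0 m0 by simp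
    then have "(\<Sum>k. ennreal (c k * m k)) \<noteq> top" by (rule ennreal_suminf_neq_top[OF sm])
    then show ?thesis by (simp add: less_top)
  qed
  finally show ?thesis .
qed




lemma alg1:
  fixes X e s :: real and d k :: nat
  assumes "e > 0"
  shows "(2^k*e) powr (-(real d+s)) * (V * (2^(k+1)*e)^d) = V * 2^d * e powr (-s) * (2 powr (-s))^k"
proof -
  have X: "2^k*e > 0" using assms by simp
  have "(2^k*e) powr (-(real d+s)) = inverse ((2^k*e)^d) * (2^k*e) powr (-s)"
    by (simp only: powr_minus powr_add powr_realpow[OF X] inverse_mult_distrib)
  moreover have "(2^(k+1)*e)^d = 2^d * (2^k*e)^d" by (simp add: power_mult_distrib)
  moreover have "(2^k*e) powr (-s) = e powr (-s) * (2 powr (-s))^k"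
    using assms by (simp add: powr_mult powr_realpow[symmetric] powr_powr mult.commute)
  ultimately show ?thesis using X by (simp add: field_simps)
qed

lemma outer_finite:
  fixes e s :: real
  assumes s: "0 < s" and e: "0 < e"
  shows "(\<integral>\<^sup>+ z. ennreal (indicator {z::'a::euclidean_space. e \<le> norm z} z * norm z powr (-(real DIM('a) + s))) \<partial>lborel) < \<infinity>"
proof (rule dyadic_bound)
  define V where "V = unit_ball_vol (real DIM('a))"
  have V0: "0 \<le> V" by (simp add: V_def unit_ball_vol_nonneg)
  show "\<exists>k. z \<in> {z. 2^k*e \<le> norm z \<and> norm z < 2^(k+1)*e}" if "z \<in> {z. e \<le> norm z}" for z :: 'a
  proof -
    have ex: "\<exists>n. norm z < 2^(Suc n) * e"
    proof -
      obtain n where "norm z / e < 2^n" using real_arch_pow[of 2 "norm z / e"] by auto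
      then have "norm z < 2^n * e" using e by (simp add: field_simps)
      also have "\<dots> \<le> 2^(Suc n) * e" using e by simp
      finally show ?thesis by blast
    qed
    define k where "k = (LEAST n. norm z < 2^(Suc n) * e)"
    have k1: "norm z < 2^(Suc k) * e" unfolding k_def by (rule LeastI_ex[OF ex])
    have k2: "2^k*e \<le> norm z"
    proof (cases k)
      case 0 then show ?thesis using that by simp
    next
      case (Suc j)
      then have "\<not> norm z < 2^(Suc j) * e" using not_less_Least[of j "\<lambda>n. norm z < 2^(Suc n) * e"] k_def by simp
      then show ?thesis using Suc by simp
    qed
    show ?thesis using k1 k2 by auto
  qed
  show "norm z powr (-(real DIM('a) + s)) \<le> (2^k*e) powr (-(real DIM('a) + s))"
    if "z \<in> {z. 2^k*e \<le> norm z \<and> norm z < 2^(k+1)*e}" for k z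
    by (rule powr_mono2') (use that s e in auto)
  show "emeasure lborel {z::'a. 2^k*e \<le> norm z \<and> norm z < 2^(k+1)*e} \<le> ennreal (V * (2^(k+1)*e)^DIM('a))" for k
  proof -
    have "emeasure lborel {z::'a. 2^k*e \<le> norm z \<and> norm z < 2^(k+1)*e} \<le> emeasure lborel (ball (0::'a) (2^(k+1)*e))"
      by (rule emeasure_mono) auto
    also have "\<dots> = ennreal (V * (2^(k+1)*e)^DIM('a))"
      using e by (simp add: emeasure_ball V_def)
    finally show ?thesis .
  qed
  show "0 \<le> (2^k*e) powr (-(real DIM('a) + s))" for k by simp
  show "0 \<le> V * (2^(k+1)*e)^DIM('a)" for k using V0 e by simp
  show "summable (\<lambda>k. (2^k*e) powr (-(real DIM('a) + s)) * (V * (2^(k+1)*e)^DIM('a)))"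
    unfolding alg1[OF e]
    by (rule summable_mult) (use s in \<open>simp add: powr_less_one\<close>)
  show "{z::'a. 2^k*e \<le> norm z \<and> norm z < 2^(k+1)*e} \<in> sets borel" for k
    by measurable
qed




lemma alg2:
  fixes q s :: real and d :: nat
  assumes q: "q > 0" and d: "d \<ge> 1"
  shows "(q/2) powr (-(real d + s)) * (q^2 * (2*q)^(d-1)) = 2 powr (real d + s) * 2^(d-1) * q powr (1 - s)"
proof -
  define A where "A = -(real d + s)"
  have a: "(q/2) powr A = q powr A / 2 powr A"
    using q by (simp add: powr_divide)
  have a2: "1 / 2 powr A = 2 powr (real d + s)"
    unfolding A_def by (simp only: powr_minus divide_inverse inverse_inverse_eq mult_1)
  have b: "q^2 = q powr 2" using q by (simp add: powr_realpow)
  have c: "(2*q)^(d-1) = 2^(d-1) * q powr (real d - 1)"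
  proof -
    have "q^(d-1) = q powr (real (d-1))" using q by (simp add: powr_realpow)
    also have "real (d-1) = real d - 1" using d by (simp add: of_nat_diff)
    finally show ?thesis by (simp add: power_mult_distrib)
  qed
  have e: "q powr A * q powr 2 * q powr (real d - 1) = q powr (1 - s)"
    unfolding A_def by (simp add: powr_add[symmetric])
  have g: "\<And>X Y Z W U::real. X / Y * (Z * (W*U)) = (X*Z*U) * (1/Y) * W"
    by simp
  show ?thesis unfolding A_def[symmetric] a b c g e a2 by simp
qed

lemma alg3:
  fixes s :: real and k :: nat
  shows "((1/2)^k) powr (1 - s) = ((1/2) powr (1 - s))^k"
proof -
  have "((1/2::real)^k) = (1/2) powr (real k)" by (simp add: powr_realpow)
  then have "((1/2::real)^k) powr (1 - s) = (1/2) powr (real k * (1 - s))" by (simp add: powr_powr)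
  also have "\<dots> = ((1/2) powr (1 - s)) powr (real k)" by (simp add: powr_powr mult.commute)
  also have "\<dots> = ((1/2) powr (1 - s))^k" by (simp add: powr_realpow)
  finally show ?thesis .
qed


lemma thin_finite:
  fixes s :: real and e :: "'a::euclidean_space"
  assumes s0: "0 < s" and s1: "s < 1" and eB: "e \<in> Basis"
  shows "(\<integral>\<^sup>+ z. ennreal (indicator {z::'a. z \<noteq> 0 \<and> norm z < 1 \<and> 0 \<le> z \<bullet> e \<and> 2 * (z \<bullet> e) \<le> (norm z)^2} z
            * norm z powr (-(real DIM('a) + s))) \<partial>lborel) < \<infinity>"
proof (rule dyadic_bound)
  define A where "A k = {z::'a. (1/2)^(k+1) \<le> norm z \<and> norm z < (1/2)^k \<and> 0 \<le> z \<bullet> e \<and> 2 * (z \<bullet> e) \<le> (norm z)^2}" for k :: nat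
  show "\<exists>k. z \<in> A k" if "z \<in> {z::'a. z \<noteq> 0 \<and> norm z < 1 \<and> 0 \<le> z \<bullet> e \<and> 2 * (z \<bullet> e) \<le> (norm z)^2}" for z
  proof -
    have z: "z \<noteq> 0" "norm z < 1" "0 \<le> z \<bullet> e" "2 * (z \<bullet> e) \<le> (norm z)^2" using that by auto
    have ex: "\<exists>n. (1/2)^(Suc n) \<le> norm z"
    proof -
      obtain n where "(1/2::real)^n < norm z" using real_arch_pow_inv[of "norm z" "1/2"] z by auto
      moreover have "(1/2::real)^(Suc n) \<le> (1/2)^n" by simp
      ultimately have "(1/2::real)^(Suc n) \<le> norm z" by linarith
      then show ?thesis by blast
    qed
    define k where "k = (LEAST n. (1/2::real)^(Suc n) \<le> norm z)"
    have k1: "(1/2)^(Suc k) \<le> norm z" unfolding k_def by (rule LeastI_ex[OF ex])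
    have k2: "norm z < (1/2)^k"
    proof (cases k)
      case 0 then show ?thesis using z by simp
    next
      case (Suc j)
      then have "\<not> (1/2::real)^(Suc j) \<le> norm z" using not_less_Least[of j "\<lambda>n. (1/2::real)^(Suc n) \<le> norm z"] k_def by simp
      then show ?thesis using Suc by simp
    qed
    show ?thesis using k1 k2 z by (auto simp: A_def)
  qed
  show "norm z powr (-(real DIM('a) + s)) \<le> ((1/2)^k/2) powr (-(real DIM('a) + s))"
    if "z \<in> A k" for k z
    by (rule powr_mono2') (use that s0 in \<open>auto simp: A_def\<close>)
  show "emeasure lborel (A k) \<le> ennreal (((1/2)^k)^2 * (2*(1/2)^k)^(DIM('a)-1))" for k
  proof -
    define q :: real where "q = (1/2)^k"
    have q0: "q > 0" by (simp add: q_def)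
    define l :: 'a where "l = (\<Sum>b\<in>Basis. (if b = e then 0 else - q) *\<^sub>R b)"
    define u :: 'a where "u = (\<Sum>b\<in>Basis. (if b = e then q^2 else q) *\<^sub>R b)"
    have lb: "l \<bullet> b = (if b = e then 0 else - q)" if "b \<in> Basis" for b
      using that by (simp add: l_def inner_sum_left_Basis)
    have ub: "u \<bullet> b = (if b = e then q^2 else q)" if "b \<in> Basis" for b
      using that by (simp add: u_def inner_sum_left_Basis)
    have sub: "A k \<subseteq> cbox l u"
    proof
      fix z assume "z \<in> A k"
      then have z: "norm z < q" "0 \<le> z \<bullet> e" "2 * (z \<bullet> e) \<le> (norm z)^2"
        by (auto simp: A_def q_def)
      have "(norm z)^2 \<le> q^2" using z(1) norm_ge_zero by (meson less_imp_le power_mono)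
      then have ze: "z \<bullet> e \<le> q^2" using z(3) q0 by (smt (verit) zero_le_power2 z(2))
      show "z \<in> cbox l u"
        unfolding mem_box
      proof (intro ballI)
        fix b :: 'a assume b: "b \<in> Basis"
        have "\<bar>z \<bullet> b\<bar> \<le> norm z" using b by (rule Basis_le_norm)
        then show "l \<bullet> b \<le> z \<bullet> b \<and> z \<bullet> b \<le> u \<bullet> b"
          using b z ze lb ub by (auto simp: abs_le_iff)
      qed
    qed
    have "emeasure lborel (A k) \<le> emeasure lborel (cbox l u)" by (rule emeasure_mono[OF sub]) simp
    also have "\<dots> = ennreal (\<Prod>b\<in>Basis. (u - l) \<bullet> b)"
      by (rule emeasure_lborel_cbox) (use lb ub q0 in auto)
    also have "(\<Prod>b\<in>Basis. (u - l) \<bullet> b) = (\<Prod>b\<in>Basis. (if b = e then q^2 else 2*q))"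
      by (rule prod.cong) (auto simp: inner_diff_left lb ub)
    also have "\<dots> = q^2 * (\<Prod>b\<in>Basis-{e}. (if b = e then q^2 else 2*q))"
      using eB by (simp add: prod.remove)
    also have "(\<Prod>b\<in>Basis-{e}. (if b = e then q^2 else 2*q)) = (2*q)^(DIM('a)-1)"
      using eB by (simp add: card_Diff_singleton)
    finally show ?thesis by (simp add: q_def)
  qed
  show "0 \<le> ((1/2)^k/2) powr (-(real DIM('a) + s))" for k by simp
  show "0 \<le> ((1/2::real)^k)^2 * (2*(1/2)^k)^(DIM('a)-1)" for k by simp
  show "summable (\<lambda>k. ((1/2::real)^k/2) powr (-(real DIM('a) + s)) * (((1/2)^k)^2 * (2*(1/2)^k)^(DIM('a)-1)))"
  proof -
    have eq: "((1/2::real)^k/2) powr (-(real DIM('a) + s)) * (((1/2)^k)^2 * (2*(1/2)^k)^(DIM('a)-1))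
       = 2 powr (real DIM('a) + s) * 2^(DIM('a)-1) * ((1/2) powr (1 - s))^k" for k
      using alg2[of "(1/2)^k" "DIM('a)" s] alg3[of k s] by (simp add: DIM_positive Suc_leI)
    show ?thesis unfolding eq
      by (rule summable_mult) (use s1 in \<open>simp add: powr01_less_one\<close>)
  qed
  show "A k \<in> sets borel" for k unfolding A_def by measurable
qed




lemma e1_Basis: "(e1::'a::euclidean_space) \<in> Basis"
  unfolding e1_def by (rule someI_ex) (use nonempty_Basis in blast)

lemma e1_norm: "norm (e1::'a::euclidean_space) = 1"
  by (rule norm_Basis[OF e1_Basis])

lemma chi_tilde_measurable[measurable]:
  assumes [measurable]: "F \<in> sets M"
  shows "chi_tilde F \<in> borel_measurable M"
  unfolding chi_tilde_def[abs_def] by measurable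

definition h0 :: "'a::euclidean_space \<Rightarrow> real" where
  "h0 z = chi_tilde (ball e1 1) z - sgn ((z - 0) \<bullet> (- e1))"

lemma h0_props:
  fixes z :: "'a::euclidean_space"
  shows "0 \<le> h0 z" "h0 z \<le> 2"
    "0 < h0 z \<Longrightarrow> 0 \<le> z \<bullet> e1 \<and> 2 * (z \<bullet> e1) \<le> (norm z)^2"
proof -
  have ee: "e1 \<bullet> (e1::'a) = 1" by (simp add: power2_norm_eq_inner[symmetric] e1_norm)
  have nd: "(norm (z - e1))^2 = (norm z)^2 - 2 * (z \<bullet> e1) + 1"
    using ee by (simp add: power2_norm_eq_inner inner_diff_left inner_diff_right inner_commute)
  have ball_iff: "z \<in> ball e1 1 \<longleftrightarrow> (norm z)^2 - 2 * (z \<bullet> e1) + 1 < 1"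
  proof -
    have "z \<in> ball e1 1 \<longleftrightarrow> norm (z - e1) < 1" by (simp add: dist_norm norm_minus_commute)
    also have "\<dots> \<longleftrightarrow> (norm (z - e1))^2 < 1"
      by (metis abs_norm_cancel power2_less_eq_zero_iff power_less_one_iff  abs_square_less_1 norm_ge_zero)
    finally show ?thesis using nd by simp
  qed
  have sg: "sgn ((z - 0) \<bullet> (- e1)) = - sgn (z \<bullet> e1)" by (simp add: sgn_minus)
  have h: "h0 z = (if (norm z)^2 - 2 * (z \<bullet> e1) + 1 < 1 then -1 else 1) + sgn (z \<bullet> e1)"
    unfolding h0_def chi_tilde_def sg using ball_iff by simp
  have nn: "0 \<le> (norm z)^2" by simp
  have nn2: "(norm z)^2 < 2 * (z \<bullet> e1) \<Longrightarrow> 0 < z \<bullet> e1" using nn by linarith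
  show "0 \<le> h0 z" unfolding h using nn nn2
    by (cases "z \<bullet> e1 > 0"; cases "z \<bullet> e1 = 0"; auto simp: sgn_if)
  show "h0 z \<le> 2" unfolding h by (auto simp: sgn_if)
  show "0 < h0 z \<Longrightarrow> 0 \<le> z \<bullet> e1 \<and> 2 * (z \<bullet> e1) \<le> (norm z)^2"
    unfolding h using nn by (auto simp: sgn_if split: if_splits)
qed

lemma h0_measurable[measurable]: "h0 \<in> borel_measurable borel"
  unfolding h0_def[abs_def] by measurable

lemma model_finite:
  fixes s :: real
  assumes s0: "0 < s" and s1: "s < 1"
  shows "(\<integral>\<^sup>+ z. ennreal (h0 (z::'a::euclidean_space) * norm z powr (-(real DIM('a) + s))) \<partial>lborel) < \<infinity>"
proof -
  let ?p = "-(real DIM('a) + s)"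
  define O1 where "O1 = {z::'a. 1 \<le> norm z}"
  define T where "T = {z::'a. z \<noteq> 0 \<and> norm z < 1 \<and> 0 \<le> z \<bullet> e1 \<and> 2 * (z \<bullet> e1) \<le> (norm z)^2}"
  have pt: "ennreal (h0 z * norm z powr ?p) \<le> 2 * ennreal (indicator O1 z * norm z powr ?p) + 2 * ennreal (indicator T z * norm z powr ?p)" for z :: 'a
  proof (cases "z = 0 \<or> h0 z = 0")
    case True then show ?thesis by auto
  next
    case False
    then have hp: "0 < h0 z" using h0_props(1)[of z] by simp
    have c: "0 \<le> z \<bullet> e1" "2 * (z \<bullet> e1) \<le> (norm z)^2" using h0_props(3)[OF hp] by auto
    have "z \<in> O1 \<or> z \<in> T" using False c by (auto simp: O1_def T_def)
    have "h0 z * norm z powr ?p \<le> 2 * norm z powr ?p"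
      using h0_props(2)[of z] by (intro mult_right_mono) auto
    then have "ennreal (h0 z * norm z powr ?p) \<le> ennreal (2 * norm z powr ?p)" by (rule ennreal_leI)
    also have "\<dots> = 2 * ennreal (norm z powr ?p)" by (simp add: ennreal_mult)
    finally have L: "ennreal (h0 z * norm z powr ?p) \<le> 2 * ennreal (norm z powr ?p)" .
    show ?thesis
    proof (cases "z \<in> O1")
      case True
      then show ?thesis using L by (intro add_increasing2) auto
    next
      case False
      then have "z \<in> T" using \<open>z \<in> O1 \<or> z \<in> T\<close> by blast
      then show ?thesis using L by (intro add_increasing) auto
    qed
  qed
  have "(\<integral>\<^sup>+ z. ennreal (h0 (z::'a) * norm z powr ?p) \<partial>lborel) \<le>
     (\<integral>\<^sup>+ z. 2 * ennreal (indicator O1 z * norm z powr ?p) + 2 * ennreal (indicator T z * norm z powr ?p) \<partial>lborel)"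
    apply (rule nn_integral_mono) using pt by blast
  also have "\<dots> = 2 * (\<integral>\<^sup>+ z. ennreal (indicator O1 z * norm z powr ?p) \<partial>lborel) + 2 * (\<integral>\<^sup>+ z. ennreal (indicator T z * norm z powr ?p) \<partial>lborel)"
    unfolding O1_def T_def by (subst nn_integral_add) (auto simp: nn_integral_cmult)
  also have "\<dots> < \<infinity>"
    using outer_finite[OF s0, of 1, where 'a='a] thin_finite[OF s0 s1 e1_Basis, where 'a='a]
    unfolding O1_def T_def by (simp add: ennreal_mult_less_top)
  finally show ?thesis .
qed




lemma J_formula:
  fixes x0 x :: "'a::euclidean_space" and r s :: real
  assumes r: "r > 0" and xr: "norm (x - x0) = r"
  defines "\<nu> \<equiv> (1/r) *\<^sub>R (x - x0)"
  defines "hx \<equiv> (\<lambda>y. chi_tilde (ball x0 r) y - sgn ((y - x) \<bullet> \<nu>))"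
  shows "(\<integral>\<^sup>+ y. ennreal (hx y * norm (x - y) powr (-(real DIM('a) + s))) \<partial>lborel)
       = ennreal (r powr (-s)) * (\<integral>\<^sup>+ z. ennreal (h0 z * norm (z::'a) powr (-(real DIM('a) + s))) \<partial>lborel)"
    and "0 \<le> hx y"
proof -
  let ?p = "-(real DIM('a) + s)"
  have nnu: "norm \<nu> = 1" using xr r by (simp add: \<nu>_def)
  have nmnu: "norm (-\<nu>) = 1" using nnu by simp
  obtain Q :: "'a \<Rightarrow> 'a" where Q: "orthogonal_transformation Q" and Qe: "Q e1 = - \<nu>"
    using exists_orth_map[OF e1_norm nmnu] by blast
  have lin: "linear Q" using Q orthogonal_transformation_linear by blast
  have xx0: "x - x0 = - (r *\<^sub>R Q e1)" using r by (simp add: Qe \<nu>_def)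
  have key: "hx (x + r *\<^sub>R Q z) = h0 z" for z
  proof -
    have eq: "x + r *\<^sub>R Q z - x0 = r *\<^sub>R Q (z - e1)"
      using xx0 by (simp add: linear_diff[OF lin] scaleR_diff_right algebra_simps)
    have "dist x0 (x + r *\<^sub>R Q z) = norm (x + r *\<^sub>R Q z - x0)" by (simp add: dist_norm norm_minus_commute)
    also have "\<dots> = norm (r *\<^sub>R Q (z - e1))" using eq by simp
    also have "\<dots> = r * norm (z - e1)" using r Q by (simp add: orthogonal_transformation_norm)
    finally have "dist x0 (x + r *\<^sub>R Q z) = r * norm (z - e1)" .
    then have b: "(x + r *\<^sub>R Q z \<in> ball x0 r) = (z \<in> ball e1 1)"
      using r by (simp add: dist_norm norm_minus_commute)
    have "(x + r *\<^sub>R Q z - x) \<bullet> \<nu> = r * (Q z \<bullet> Q (- e1))"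
      using Qe lin by (simp add: linear_neg)
    also have "\<dots> = r * ((z - 0) \<bullet> (- e1))"
      using Q by (simp add: orthogonal_transformation_def)
    finally have "sgn ((x + r *\<^sub>R Q z - x) \<bullet> \<nu>) = sgn ((z - 0) \<bullet> (- e1))"
      using r by (simp add: sgn_mult)
    then show ?thesis using b by (simp add: hx_def h0_def chi_tilde_def)
  qed
  have phi: "norm (x - (x + r *\<^sub>R Q z)) powr ?p = r powr ?p * norm z powr ?p" for z
  proof -
    have "norm (x - (x + r *\<^sub>R Q z)) = r * norm z"
      using r Q by (simp add: orthogonal_transformation_norm)
    then show ?thesis using r by (simp add: powr_mult)
  qed
  have hxm[measurable]: "hx \<in> borel_measurable borel" unfolding hx_def by measurable
  have fm: "(\<lambda>y. ennreal (hx y * norm (x - y) powr ?p)) \<in> borel_measurable borel" by measurable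
  have "(\<integral>\<^sup>+ y. ennreal (hx y * norm (x - y) powr ?p) \<partial>lborel)
      = ennreal (r ^ DIM('a)) * (\<integral>\<^sup>+ z. ennreal (hx (x + r *\<^sub>R Q z) * norm (x - (x + r *\<^sub>R Q z)) powr ?p) \<partial>lborel)"
    by (rule nn_integral_affine_orth[OF Q fm r])
  also have "(\<integral>\<^sup>+ z. ennreal (hx (x + r *\<^sub>R Q z) * norm (x - (x + r *\<^sub>R Q z)) powr ?p) \<partial>lborel)
      = (\<integral>\<^sup>+ z. ennreal (r powr ?p) * ennreal (h0 (z::'a) * norm z powr ?p) \<partial>lborel)"
  proof (rule nn_integral_cong)
    fix z :: 'a
    show "ennreal (hx (x + r *\<^sub>R Q z) * norm (x - (x + r *\<^sub>R Q z)) powr ?p) = ennreal (r powr ?p) * ennreal (h0 z * norm z powr ?p)"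
      unfolding key phi using h0_props(1)[of z]
      by (simp add: ennreal_mult[symmetric] mult_ac)
  qed
  also have "\<dots> = ennreal (r powr ?p) * (\<integral>\<^sup>+ z. ennreal (h0 (z::'a) * norm z powr ?p) \<partial>lborel)"
    by (rule nn_integral_cmult) measurable
  also have "ennreal (r ^ DIM('a)) * (ennreal (r powr ?p) * (\<integral>\<^sup>+ z. ennreal (h0 z * norm (z::'a) powr ?p) \<partial>lborel))
      = ennreal (r ^ DIM('a) * r powr ?p) * (\<integral>\<^sup>+ z. ennreal (h0 (z::'a) * norm z powr ?p) \<partial>lborel)"
    using r by (simp add: ennreal_mult mult.assoc)
  also have "r ^ DIM('a) * r powr ?p = r powr (-s)"
    using r by (simp add: powr_realpow[symmetric] powr_add[symmetric])
  finally show "(\<integral>\<^sup>+ y. ennreal (hx y * norm (x - y) powr ?p) \<partial>lborel)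
       = ennreal (r powr (-s)) * (\<integral>\<^sup>+ z. ennreal (h0 z * norm (z::'a) powr ?p) \<partial>lborel)" .
  define z where "z = inv Q ((1/r) *\<^sub>R (y - x))"
  have "Q z = (1/r) *\<^sub>R (y - x)"
    unfolding z_def using orthogonal_transformation_surj[OF Q] by (simp add: surj_f_inv_f)
  then have "x + r *\<^sub>R Q z = y" using r by simp
  then show "0 \<le> hx y" using key[of z] h0_props(1)[of z] by simp
qed




lemma ball_sets_borel[measurable]: "ball (x::'a::euclidean_space) e \<in> sets borel"
  by (simp add: borel_open)

lemma borel_to_lebesgue: "f \<in> borel_measurable borel \<Longrightarrow> (f::'a::euclidean_space \<Rightarrow> 'b::topological_space) \<in> borel_measurable lebesgue"
  by (rule measurable_completion) simp

definition C0 :: "real \<Rightarrow> 'a::euclidean_space itself \<Rightarrow> real" where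
  "C0 s _ = enn2real (\<integral>\<^sup>+ z. ennreal (h0 (z::'a) * norm z powr (-(real DIM('a) + s))) \<partial>lborel)"

lemma C0_nonneg: "0 \<le> C0 s TYPE('a::euclidean_space)"
  by (simp add: C0_def)

lemma model_eq:
  assumes "0 < s" "s < 1"
  shows "(\<integral>\<^sup>+ z. ennreal (h0 (z::'a::euclidean_space) * norm z powr (-(real DIM('a) + s))) \<partial>lborel) = ennreal (C0 s TYPE('a))"
  unfolding C0_def using model_finite[OF assms, where 'a='a] by (simp add: ennreal_enn2real less_top)

lemma nn_integral_reflect_lborel:
  fixes f :: "'a::euclidean_space \<Rightarrow> ennreal"
  assumes [measurable]: "f \<in> borel_measurable borel"
  shows "(\<integral>\<^sup>+ y. f (x - y) \<partial>lborel) = (\<integral>\<^sup>+ y. f y \<partial>lborel)"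
proof -
  have "(\<integral>\<^sup>+ y. f y \<partial>lborel) = (\<integral>\<^sup>+ y. f y \<partial>density (distr lborel borel (\<lambda>z. x + (-1) *\<^sub>R z)) (\<lambda>_. \<bar>-1::real\<bar>^DIM('a)))"
    using lborel_affine[of "-1" x] by simp
  also have "\<dots> = (\<integral>\<^sup>+ z. f (x + (-1) *\<^sub>R z) \<partial>lborel)"
    by (simp add: nn_integral_density nn_integral_distr)
  finally show ?thesis by simp
qed

lemma outer_integrable:
  fixes x :: "'a::euclidean_space"
  assumes s: "0 < s" and e: "0 < e"
  shows "integrable lebesgue (\<lambda>y. indicator (UNIV - ball x e) y * norm (x - y) powr (-(real DIM('a) + s)))"
proof (rule integrableI_nonneg)
  show "(\<lambda>y. indicator (UNIV - ball x e) y * norm (x - y) powr (-(real DIM('a) + s))) \<in> borel_measurable lebesgue"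
    by (rule borel_to_lebesgue) measurable
  show "AE y in lebesgue. 0 \<le> indicator (UNIV - ball x e) y * norm (x - y) powr (-(real DIM('a) + s))"
    by simp
  have "(\<integral>\<^sup>+ y. ennreal (indicator (UNIV - ball x e) y * norm (x - y) powr (-(real DIM('a) + s))) \<partial>lebesgue)
      = (\<integral>\<^sup>+ y. ennreal (indicator (UNIV - ball x e) y * norm (x - y) powr (-(real DIM('a) + s))) \<partial>lborel)"
    by (simp add: nn_integral_completion)
  also have "\<dots> = (\<integral>\<^sup>+ y. (\<lambda>w. ennreal (indicator {z::'a. e \<le> norm z} w * norm w powr (-(real DIM('a) + s)))) (x - y) \<partial>lborel)"
    by (rule nn_integral_cong) (simp add: indicator_def dist_norm)
  also have "\<dots> = (\<integral>\<^sup>+ w. ennreal (indicator {z::'a. e \<le> norm z} w * norm w powr (-(real DIM('a) + s))) \<partial>lborel)"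
    by (rule nn_integral_reflect_lborel) measurable
  also have "\<dots> < \<infinity>" by (rule outer_finite[OF s e])
  finally show "(\<integral>\<^sup>+ y. ennreal (indicator (UNIV - ball x e) y * norm (x - y) powr (-(real DIM('a) + s))) \<partial>lebesgue) < \<infinity>" .
qed




lemma core:
  fixes K :: "'a::euclidean_space \<Rightarrow> real" and s lam Lam r :: real and x0 x :: 'a
  assumes s0: "0 < s" and s1: "s < 1" and lam0: "0 \<le> lam" and lamLam: "lam \<le> Lam"
    and Km[measurable]: "K \<in> borel_measurable lebesgue"
    and bnd: "\<forall>y. y \<noteq> 0 \<longrightarrow> lam * norm y powr (-(real DIM('a) + s)) \<le> K y
                      \<and> K y \<le> Lam * norm y powr (-(real DIM('a) + s))"
    and sym: "\<forall>y. y \<noteq> 0 \<longrightarrow> K y = K (-y)"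
    and r: "0 < r" and xr: "norm (x - x0) = r"
  shows "\<exists>V. (trunc_int K (ball x0 r) x \<longlongrightarrow> V) (at_right 0)
            \<and> lam * (r powr (-s) * C0 s TYPE('a)) \<le> V \<and> V \<le> Lam * (r powr (-s) * C0 s TYPE('a))"
proof -
  let ?p = "-(real DIM('a) + s)"
  define \<nu> where "\<nu> = (1/r) *\<^sub>R (x - x0)"
  define hx where "hx = (\<lambda>y. chi_tilde (ball x0 r) y - sgn ((y - x) \<bullet> \<nu>))"
  define phx where "phx = (\<lambda>y. norm (x - y) powr ?p)"
  define c where "c = r powr (-s) * C0 s TYPE('a)"
  have c0: "0 \<le> c" by (simp add: c_def C0_nonneg)
  have Lam0: "0 \<le> Lam" using lam0 lamLam by simp
  have hx0: "0 \<le> hx y" for y using J_formula(2)[OF r xr] unfolding hx_def \<nu>_def by blast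
  have ballm[measurable]: "ball x0 r \<in> sets lebesgue" "ball x e' \<in> sets lebesgue" for e'
    by (simp_all add: open_sets_lebesgue)
  have cxm[measurable]: "- {x} \<in> sets lebesgue"
    by (simp add: open_sets_lebesgue open_Compl)
  have sgm[measurable]: "(\<lambda>y. sgn ((y - x) \<bullet> \<nu>)) \<in> borel_measurable lebesgue"
    by (rule borel_to_lebesgue) measurable
  have hxm[measurable]: "hx \<in> borel_measurable borel" unfolding hx_def by measurable
  have hxl[measurable]: "hx \<in> borel_measurable lebesgue" by (rule borel_to_lebesgue) (rule hxm)
  have phm[measurable]: "phx \<in> borel_measurable borel" unfolding phx_def by measurable
  have phl[measurable]: "phx \<in> borel_measurable lebesgue" by (rule borel_to_lebesgue) (rule phm)
  have Kx[measurable]: "(\<lambda>y. K (x - y)) \<in> borel_measurable lebesgue"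
    using measurable_compose[OF lebesgue_reflect(2)[of x] Km] by simp
  have J: "has_bochner_integral lebesgue (\<lambda>y. hx y * phx y) c"
  proof (rule has_bochner_integral_nn_integral)
    show "(\<lambda>y. hx y * phx y) \<in> borel_measurable lebesgue" by measurable
    show "AE y in lebesgue. 0 \<le> hx y * phx y" using hx0 by (simp add: phx_def)
    show "0 \<le> c" by (rule c0)
    have "(\<integral>\<^sup>+ y. ennreal (hx y * phx y) \<partial>lebesgue) = (\<integral>\<^sup>+ y. ennreal (hx y * phx y) \<partial>lborel)"
      by (simp add: nn_integral_completion)
    also have "\<dots> = ennreal (r powr (-s)) * ennreal (C0 s TYPE('a))"
      using J_formula(1)[OF r xr, of s] model_eq[OF s0 s1, where 'a='a]
      unfolding hx_def phx_def \<nu>_def by simp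
    also have "\<dots> = ennreal c" using C0_nonneg[of s, where 'a='a] by (simp add: c_def ennreal_mult)
    finally show "(\<integral>\<^sup>+ y. ennreal (hx y * phx y) \<partial>lebesgue) = ennreal c" .
  qed
  have Jint: "integrable lebesgue (\<lambda>y. hx y * phx y)" using J by (simp add: has_bochner_integral_iff)
  have Jval: "(\<integral>y. hx y * phx y \<partial>lebesgue) = c" using J by (simp add: has_bochner_integral_iff)
  have Kpos: "0 \<le> K (x - y)" if "y \<noteq> x" for y
  proof -
    have "lam * norm (x - y) powr ?p \<le> K (x - y)" using bnd that by simp
    moreover have "0 \<le> lam * norm (x - y) powr ?p" using lam0 by simp
    ultimately show ?thesis by linarith
  qed
  have Kup: "K (x - y) \<le> Lam * phx y" if "y \<noteq> x" for y using bnd that by (simp add: phx_def)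
  have Klo: "lam * phx y \<le> K (x - y)" if "y \<noteq> x" for y using bnd that by (simp add: phx_def)
  have trunc_eq: "trunc_int K (ball x0 r) x e = (\<integral>y. indicator (UNIV - ball x e) y * (hx y * K (x - y)) \<partial>lebesgue)"
    if e: "0 < e" for e
  proof -
    let ?A = "UNIV - ball x e"
    have xA: "y \<in> ?A \<Longrightarrow> y \<noteq> x" for y using e by auto
    have Oi: "integrable lebesgue (\<lambda>y. Lam * (indicator ?A y * phx y))"
      using outer_integrable[OF s0 e, of x] unfolding phx_def by simp
    have bound: "\<bar>t\<bar> \<le> 1 \<Longrightarrow> norm (indicator ?A y * (t * K (x - y))) \<le> norm (Lam * (indicator ?A y * phx y))" for t y
    proof (cases "y \<in> ?A")
      case True
      then have yx: "y \<noteq> x" by (rule xA)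
      assume t: "\<bar>t\<bar> \<le> 1"
      have "\<bar>t * K (x - y)\<bar> \<le> 1 * K (x - y)"
        using t Kpos[OF yx] by (simp add: abs_mult mult_left_le_one_le)
      also have "\<dots> \<le> Lam * phx y" using Kup[OF yx] by simp
      finally show ?thesis using True Lam0 by (simp add: phx_def)
    qed simp
    have I1: "integrable lebesgue (\<lambda>y. indicator ?A y * (chi_tilde (ball x0 r) y * K (x - y)))"
    proof (rule Bochner_Integration.integrable_bound[OF Oi])
      show "(\<lambda>y. indicator ?A y * (chi_tilde (ball x0 r) y * K (x - y))) \<in> borel_measurable lebesgue" by measurable
      show "AE y in lebesgue. norm (indicator ?A y * (chi_tilde (ball x0 r) y * K (x - y))) \<le> norm (Lam * (indicator ?A y * phx y))"
        by (rule AE_I2, rule bound) (simp add: chi_tilde_def)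
    qed
    have I2: "integrable lebesgue (\<lambda>y. indicator ?A y * (sgn ((y - x) \<bullet> \<nu>) * K (x - y)))"
    proof (rule Bochner_Integration.integrable_bound[OF Oi])
      show "(\<lambda>y. indicator ?A y * (sgn ((y - x) \<bullet> \<nu>) * K (x - y))) \<in> borel_measurable lebesgue" by measurable
      show "AE y in lebesgue. norm (indicator ?A y * (sgn ((y - x) \<bullet> \<nu>) * K (x - y))) \<le> norm (Lam * (indicator ?A y * phx y))"
        by (rule AE_I2, rule bound) (simp add: sgn_if)
    qed
    define G where "G = (\<lambda>y. indicator ?A y * (sgn ((y - x) \<bullet> \<nu>) * K (x - y)))"
    have Gm[measurable]: "G \<in> borel_measurable lebesgue" unfolding G_def by measurable
    have Grefl: "G ((x + x) - y) = - G y" for y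
    proof (cases "y = x")
      case True then show ?thesis using e by (simp add: G_def)
    next
      case False
      have d: "dist x (x + x - y) = dist x y" by (simp add: dist_norm norm_minus_commute algebra_simps)
      have s': "sgn ((x + x - y - x) \<bullet> \<nu>) = - sgn ((y - x) \<bullet> \<nu>)"
        by (simp add: algebra_simps inner_diff_left sgn_minus[symmetric])
      have k: "K (x - (x + x - y)) = K (x - y)"
        using sym False by (metis add_diff_cancel_left' diff_add_cancel diff_diff_eq2 minus_diff_eq right_minus_eq)
      show ?thesis unfolding G_def using d s' k by (simp add: indicator_def)
    qed
    have "integral\<^sup>L lebesgue G = integral\<^sup>L (distr lebesgue lebesgue (\<lambda>y. (x + x) - y)) G"
      by (simp add: lebesgue_reflect(1))
    also have "\<dots> = (\<integral>y. G ((x + x) - y) \<partial>lebesgue)"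
      by (rule integral_distr[OF lebesgue_reflect(2) Gm])
    also have "\<dots> = - integral\<^sup>L lebesgue G" unfolding Grefl by simp
    finally have G0: "integral\<^sup>L lebesgue G = 0" by simp
    have "trunc_int K (ball x0 r) x e = (\<integral>y. indicator ?A y * (chi_tilde (ball x0 r) y * K (x - y)) \<partial>lebesgue)"
      by (simp add: trunc_int_def set_lebesgue_integral_def)
    also have "\<dots> = (\<integral>y. indicator ?A y * (hx y * K (x - y)) + G y \<partial>lebesgue)"
      by (rule Bochner_Integration.integral_cong) (auto simp: hx_def G_def algebra_simps)
    also have "\<dots> = (\<integral>y. indicator ?A y * (hx y * K (x - y)) \<partial>lebesgue) + integral\<^sup>L lebesgue G"
    proof (rule Bochner_Integration.integral_add)
      have "integrable lebesgue (\<lambda>y. indicator ?A y * (chi_tilde (ball x0 r) y * K (x - y)) - G y)"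
        using I1 I2 unfolding G_def by (rule Bochner_Integration.integrable_diff)
      then show "integrable lebesgue (\<lambda>y. indicator ?A y * (hx y * K (x - y)))"
        by (rule Bochner_Integration.integrable_cong[THEN iffD1, rotated 2]) (auto simp: hx_def G_def algebra_simps)
      show "integrable lebesgue G" using I2 unfolding G_def .
    qed
    finally show ?thesis using G0 by simp
  qed
  have gen_bound: "norm (indicator A y * (hx y * K (x - y))) \<le> Lam * (hx y * phx y)" if "x \<notin> A" for A y
  proof (cases "y \<in> A")
    case True
    then have yx: "y \<noteq> x" using that by auto
    have "norm (indicator A y * (hx y * K (x - y))) = hx y * K (x - y)"
      using True hx0[of y] Kpos[OF yx] by simp
    also have "\<dots> \<le> hx y * (Lam * phx y)" using Kup[OF yx] hx0[of y] by (rule mult_left_mono)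
    finally show ?thesis by (simp add: mult_ac)
  next
    case False
    then show ?thesis using hx0[of y] Lam0 by (simp add: phx_def)
  qed
  define F where "F = (\<lambda>y. indicator (- {x}) y * (hx y * K (x - y)))"
  define S where "S = (\<lambda>t y. indicator (UNIV - ball x (inverse t)) y * (hx y * K (x - y)))"
  have Fm[measurable]: "F \<in> borel_measurable lebesgue" unfolding F_def by measurable
  have Sm[measurable]: "S t \<in> borel_measurable lebesgue" for t unfolding S_def by measurable
  have Wint: "integrable lebesgue (\<lambda>y. Lam * (hx y * phx y))"
    using Jint by (rule integrable_mult_right)
  have Fint: "integrable lebesgue F"
  proof (rule Bochner_Integration.integrable_bound[OF Wint Fm])
    show "AE y in lebesgue. norm (F y) \<le> norm (Lam * (hx y * phx y))"
    proof (rule AE_I2)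
      fix y :: 'a
      have "norm (F y) \<le> Lam * (hx y * phx y)" using gen_bound[of "- {x}" y] unfolding F_def by simp
      also have "\<dots> \<le> norm (Lam * (hx y * phx y))" by simp
      finally show "norm (F y) \<le> norm (Lam * (hx y * phx y))" .
    qed
  qed
  have lim1: "((\<lambda>t. integral\<^sup>L lebesgue (S t)) \<longlongrightarrow> integral\<^sup>L lebesgue F) at_top"
  proof (rule integral_dominated_convergence_at_top[OF Fm Sm Wint])
    show "AE y in lebesgue. ((\<lambda>t. S t y) \<longlongrightarrow> F y) at_top"
    proof (rule AE_I2)
      fix y :: 'a
      show "((\<lambda>t. S t y) \<longlongrightarrow> F y) at_top"
      proof (cases "y = x")
        case True
        have "eventually (\<lambda>t. S t y = F y) at_top"
          using eventually_gt_at_top[of 0] by eventually_elim (simp add: S_def F_def True)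
        then show ?thesis by (rule tendsto_eventually)
      next
        case False
        then have d: "0 < dist x y" by simp
        have "eventually (\<lambda>t. S t y = F y) at_top"
          using eventually_gt_at_top[of "inverse (dist x y)"]
        proof eventually_elim
          case (elim t)
          then have "inverse t < inverse (inverse (dist x y))"
            using d by (intro less_imp_inverse_less) auto
          then have "y \<notin> ball x (inverse t)" using d by (simp add: dist_commute)
          then show ?case using False by (simp add: S_def F_def)
        qed
        then show ?thesis by (rule tendsto_eventually)
      qed
    qed
    show "\<forall>\<^sub>F t in at_top. AE y in lebesgue. norm (S t y) \<le> Lam * (hx y * phx y)"
      using eventually_gt_at_top[of 0]
    proof eventually_elim
      case (elim t)
      then have "x \<notin> UNIV - ball x (inverse t)" by simp
      then show ?case using gen_bound unfolding S_def by blast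
    qed
  qed
  have lim2: "((\<lambda>t. trunc_int K (ball x0 r) x (inverse t)) \<longlongrightarrow> integral\<^sup>L lebesgue F) at_top"
  proof (rule tendsto_cong[THEN iffD1, OF _ lim1])
    show "\<forall>\<^sub>F t in at_top. integral\<^sup>L lebesgue (S t) = trunc_int K (ball x0 r) x (inverse t)"
      using eventually_gt_at_top[of 0]
      by eventually_elim (simp add: trunc_eq S_def)
  qed
  have lim3: "(trunc_int K (ball x0 r) x \<longlongrightarrow> integral\<^sup>L lebesgue F) (at_right 0)"
    using lim2 unfolding filterlim_at_top_to_right by simp
  have lo: "lam * c \<le> integral\<^sup>L lebesgue F"
  proof -
    have "lam * c = (\<integral>y. lam * (hx y * phx y) \<partial>lebesgue)" using Jval by simp
    also have "\<dots> \<le> integral\<^sup>L lebesgue F"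
    proof (rule integral_mono)
      show "integrable lebesgue (\<lambda>y. lam * (hx y * phx y))" using Jint by (rule integrable_mult_right)
      show "integrable lebesgue F" by (rule Fint)
      fix y :: 'a
      show "lam * (hx y * phx y) \<le> F y"
      proof (cases "y = x")
        case True then show ?thesis by (simp add: F_def phx_def)
      next
        case False
        have "lam * (hx y * phx y) = hx y * (lam * phx y)" by (simp add: mult_ac)
        also have "\<dots> \<le> hx y * K (x - y)" using Klo[OF False] hx0[of y] by (rule mult_left_mono)
        finally show ?thesis using False by (simp add: F_def)
      qed
    qed
    finally show ?thesis .
  qed
  have up: "integral\<^sup>L lebesgue F \<le> Lam * c"
  proof -
    have "integral\<^sup>L lebesgue F \<le> (\<integral>y. Lam * (hx y * phx y) \<partial>lebesgue)"
    proof (rule integral_mono[OF Fint Wint])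
      fix y :: 'a
      show "F y \<le> Lam * (hx y * phx y)"
        using gen_bound[of "- {x}" y] unfolding F_def by (auto simp: abs_le_iff)
    qed
    also have "\<dots> = Lam * c" using Jval by simp
    finally show ?thesis .
  qed
  show ?thesis using lim3 lo up unfolding c_def by blast
qed




lemma Hs_eq:
  assumes s0: "0 < s" and s1: "s < 1"
  shows "H_s_B1_e1 s TYPE('a::euclidean_space) = C0 s TYPE('a)"
proof -
  define K0 where "K0 = (\<lambda>y::'a. 1 / norm y powr (real DIM('a) + s))"
  have K0m: "K0 \<in> borel_measurable lebesgue" unfolding K0_def by (rule borel_to_lebesgue) measurable
  have bnd: "\<forall>y. y \<noteq> 0 \<longrightarrow> 1 * norm y powr (-(real DIM('a) + s)) \<le> K0 y
                      \<and> K0 y \<le> 1 * norm y powr (-(real DIM('a) + s))"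
  proof -
    have eq: "\<And>y. norm y powr (-(real DIM('a) + s)) = K0 y" by (simp only: K0_def powr_minus_divide)
    show ?thesis by (simp only: eq mult_1 order_refl simp_thms)
  qed
  have sym: "\<forall>y. y \<noteq> 0 \<longrightarrow> K0 y = K0 (-y)" by (simp add: K0_def)
  have n: "norm (0 - e1) = (1::real)" by (simp add: e1_norm)
  obtain V where V: "(trunc_int K0 (ball e1 1) 0 \<longlongrightarrow> V) (at_right 0)"
    "1 * (1 powr (-s) * C0 s TYPE('a)) \<le> V" "V \<le> 1 * (1 powr (-s) * C0 s TYPE('a))"
    using core[OF s0 s1 _ _ K0m bnd sym _ n] by auto
  have VC: "V = C0 s TYPE('a)" using V(2,3) by simp
  have tr: "trunc_int K0 (ball e1 1) 0 = (\<lambda>\<epsilon>. LINT y : (UNIV - ball (0::'a) \<epsilon>) | lebesgue.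
        chi_tilde (ball (e1::'a) 1) y * (1 / norm y powr (real DIM('a) + s)))"
    by (rule ext) (simp add: trunc_int_def K0_def)
  show ?thesis
    unfolding H_s_B1_e1_def using V(1) unfolding tr VC
    by (intro tendsto_Lim) (simp_all add: trivial_limit_at_right_real)
qed

theorem lemma2p1:
  fixes K :: "'a::euclidean_space \<Rightarrow> real"
    and s lam Lam r :: real and x0 :: 'a
  assumes "0 < s" "s < 1" "0 < lam" "lam \<le> Lam"
    and "K \<in> borel_measurable lebesgue"
    and "\<forall>y. y \<noteq> 0 \<longrightarrow> lam * norm y powr (-(real DIM('a) + s)) \<le> K y
                      \<and> K y \<le> Lam * norm y powr (-(real DIM('a) + s))"
    and "\<forall>y. y \<noteq> 0 \<longrightarrow> K y = K (-y)"
    and "0 < r"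
  shows "\<forall>x \<in> frontier (ball x0 r).
           (\<exists>L. (trunc_int K (ball x0 r) x \<longlongrightarrow> L) (at_right 0))
         \<and> lam * r powr (-s) * H_s_B1_e1 s TYPE('a) \<le> H_KB K (ball x0 r) x
         \<and> H_KB K (ball x0 r) x \<le> Lam * r powr (-s) * H_s_B1_e1 s TYPE('a)"
proof
  fix x assume "x \<in> frontier (ball x0 r)"
  then have xr: "norm (x - x0) = r" using assms(8) by (simp add: dist_norm norm_minus_commute)
  obtain V where V: "(trunc_int K (ball x0 r) x \<longlongrightarrow> V) (at_right 0)"
    "lam * (r powr (-s) * C0 s TYPE('a)) \<le> V" "V \<le> Lam * (r powr (-s) * C0 s TYPE('a))"
    using core[OF assms(1,2) _ assms(4,5,6,7,8) xr] assms(3) by auto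
  have H: "H_KB K (ball x0 r) x = V"
    unfolding H_KB_def using V(1) by (intro tendsto_Lim) (simp_all add: trivial_limit_at_right_real)
  show "(\<exists>L. (trunc_int K (ball x0 r) x \<longlongrightarrow> L) (at_right 0))
         \<and> lam * r powr (-s) * H_s_B1_e1 s TYPE('a) \<le> H_KB K (ball x0 r) x
         \<and> H_KB K (ball x0 r) x \<le> Lam * r powr (-s) * H_s_B1_e1 s TYPE('a)"
    using V H Hs_eq[OF assms(1,2), where 'a='a] by (auto simp: mult.assoc)
qed


end
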